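(* Let $v>0$ entrywise, $B\in\mathbb{R}^n_{>0}$. For all $(b,\delta),(b',\delta')\in\mathcal{B}$ with $b,\delta$ having strictly positive entries, $$\varphi(b')\le\varphi(b)+\langle\nabla\varphi(b),b'-b\rangle+\sum_{i,j}b'_{ij}\log\frac{b'_{ij}}{b_{ij}}+\sum_i\delta'_i\log\frac{\delta'_i}{\delta_i}.$$
   Context: QL-Shmyrev program: $\mathcal{B}=\{(b,\delta)\in\mathbb{R}^{n\times m}\times\mathbb{R}^n: b\ge0,\delta\ge0,\sum_jb_{ij}+\delta_i=B_i\ \forall i\}$, $p_j(b)=\sum_ib_{ij}$, $\varphi(b)=-\sum_{i,j}(1+\log v_{ij})b_{ij}+\sum_jp_j(b)\log p_j(b)$; $\nabla\varphi(b)$ is the gradient with respect to $b$, with entries $\log(p_j(b)/v_{ij})$. Convention $0\log0=0$. *)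

theory Defs
  imports "HOL-Analysis.Analysis"
begin

text \<open>Buyers are indexed by i < n, goods by j < m. Bids b :: nat => nat => real
  (b i j), leftover budgets delta :: nat => real.\<close>

definition xlogx :: "real \<Rightarrow> real" where
  "xlogx x = (if x = 0 then 0 else x * ln x)"

definition feasible :: "nat \<Rightarrow> nat \<Rightarrow> (nat \<Rightarrow> real) \<Rightarrow> (nat \<Rightarrow> nat \<Rightarrow> real) \<Rightarrow> (nat \<Rightarrow> real) \<Rightarrow> bool" where
  "feasible n m B b \<delta> \<longleftrightarrow>
     (\<forall>i<n. \<forall>j<m. b i j \<ge> 0) \<and> (\<forall>i<n. \<delta> i \<ge> 0) \<and>
     (\<forall>i<n. (\<Sum>j<m. b i j) + \<delta> i = B i)"

definition price :: "nat \<Rightarrow> (nat \<Rightarrow> nat \<Rightarrow> real) \<Rightarrow> nat \<Rightarrow> real" where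
  "price n b j = (\<Sum>i<n. b i j)"

definition phi :: "nat \<Rightarrow> nat \<Rightarrow> (nat \<Rightarrow> nat \<Rightarrow> real) \<Rightarrow> (nat \<Rightarrow> nat \<Rightarrow> real) \<Rightarrow> real" where
  "phi n m v b = - (\<Sum>i<n. \<Sum>j<m. (1 + ln (v i j)) * b i j)
                 + (\<Sum>j<m. xlogx (price n b j))"

definition grad_phi :: "nat \<Rightarrow> (nat \<Rightarrow> nat \<Rightarrow> real) \<Rightarrow> (nat \<Rightarrow> nat \<Rightarrow> real) \<Rightarrow> nat \<Rightarrow> nat \<Rightarrow> real" where
  "grad_phi n v b i j = ln (price n b j / v i j)"

end

theory Submission
  imports Defs
begin

definition KL :: "real \<Rightarrow> real \<Rightarrow> real" where
  "KL x y = (if x = 0 then 0 else x * ln (x / y))"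

lemma kl_ge: assumes "x \<ge> 0" "y > 0" shows "x - y \<le> KL x y"
proof (cases "x = 0")
  case True thus ?thesis using assms by (simp add: KL_def)
next
  case False
  hence xp: "x > 0" using assms by simp
  have "ln (y / x) \<le> y / x - 1" using xp assms by (intro ln_le_minus_one) auto
  hence "ln (x / y) \<ge> 1 - y / x" using xp assms by (simp add: ln_div)
  hence "x * ln (x / y) \<ge> x * (1 - y / x)" using xp by (intro mult_left_mono) auto
  also have "x * (1 - y / x) = x - y" using xp by (simp add: field_simps)
  finally show ?thesis using False by (simp add: KL_def)
qed

lemma logsum:
  assumes fin: "finite I" and bp: "\<forall>i\<in>I. b i > 0" and bp': "\<forall>i\<in>I. b' i \<ge> 0"
  shows "KL (\<Sum>i\<in>I. b' i) (\<Sum>i\<in>I. b i) \<le> (\<Sum>i\<in>I. KL (b' i) (b i))"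
proof -
  define P where "P = (\<Sum>i\<in>I. b i)"
  define P' where "P' = (\<Sum>i\<in>I. b' i)"
  have P'ge: "P' \<ge> 0" unfolding P'_def using bp' by (intro sum_nonneg) auto
  show ?thesis
  proof (cases "P' = 0")
    case True
    hence "\<forall>i\<in>I. b' i = 0" using sum_nonneg_eq_0_iff[OF fin] bp' unfolding P'_def by blast
    thus ?thesis using True unfolding P'_def by (simp add: KL_def)
  next
    case False
    hence "I \<noteq> {}" unfolding P'_def by auto
    hence Pp: "P > 0" unfolding P_def using fin bp by (intro sum_pos) auto
    have P'p: "P' > 0" using False P'ge by simp
    have each: "KL (b' i) (b i) - b' i * ln (P' / P) \<ge> b' i - b i * P' / P" if iI: "i \<in> I" for i
    proof (cases "b' i = 0")
      case True
      have "b i > 0" using bp iI by auto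
      hence "0 \<le> b i * P' / P" using Pp P'p by simp
      thus ?thesis using True by (simp add: KL_def)
    next
      case False
      have bi: "b i > 0" "b' i > 0" using bp bp' iI False by force+
      have y: "b i * P' / P > 0" using bi Pp P'p by simp
      have "b' i - b i * P' / P \<le> KL (b' i) (b i * P' / P)" using kl_ge[OF _ y] bi by simp
      also have "KL (b' i) (b i * P' / P) = b' i * (ln (b' i / b i) - ln (P' / P))"
        using bi Pp P'p False by (simp add: KL_def ln_div ln_mult)
      also have "\<dots> = KL (b' i) (b i) - b' i * ln (P' / P)"
        using False by (simp add: KL_def algebra_simps)
      finally show ?thesis .
    qed
    have "(\<Sum>i\<in>I. b' i - b i * P' / P) \<le> (\<Sum>i\<in>I. KL (b' i) (b i) - b' i * ln (P' / P))"
      using each by (intro sum_mono) auto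
    moreover have "(\<Sum>i\<in>I. b' i - b i * P' / P) = 0"
      using Pp unfolding sum_subtractf P_def[symmetric] P'_def[symmetric]
      by (simp add: sum_divide_distrib[symmetric] sum_distrib_right[symmetric] P_def[symmetric])
    moreover have "(\<Sum>i\<in>I. KL (b' i) (b i) - b' i * ln (P' / P))
        = (\<Sum>i\<in>I. KL (b' i) (b i)) - P' * ln (P' / P)"
      unfolding sum_subtractf P'_def by (simp add: sum_distrib_right)
    ultimately show ?thesis using False
      unfolding P_def[symmetric] P'_def[symmetric] by (simp add: KL_def)
  qed
qed

theorem mainTheorem11:
  fixes n m :: nat and v b b' :: "nat \<Rightarrow> nat \<Rightarrow> real" and B \<delta> \<delta>' :: "nat \<Rightarrow> real"
  assumes v_pos: "\<forall>i<n. \<forall>j<m. v i j > 0"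
    and B_pos: "\<forall>i<n. B i > 0"
    and feas: "feasible n m B b \<delta>"
    and feas': "feasible n m B b' \<delta>'"
    and b_pos: "\<forall>i<n. \<forall>j<m. b i j > 0"
    and \<delta>_pos: "\<forall>i<n. \<delta> i > 0"
  shows "phi n m v b' \<le> phi n m v b
           + (\<Sum>i<n. \<Sum>j<m. grad_phi n v b i j * (b' i j - b i j))
           + (\<Sum>i<n. \<Sum>j<m. (if b' i j = 0 then 0 else b' i j * ln (b' i j / b i j)))
           + (\<Sum>i<n. (if \<delta>' i = 0 then 0 else \<delta>' i * ln (\<delta>' i / \<delta> i)))"
proof (cases "n = 0")
  case True thus ?thesis by (simp add: phi_def price_def xlogx_def)
next
  case False
  define p where "p j = price n b j" for j
  define p' where "p' j = price n b' j" for j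
  have b'nn: "\<forall>i<n. \<forall>j<m. b' i j \<ge> 0" and d'nn: "\<forall>i<n. \<delta>' i \<ge> 0"
    and Bb': "\<forall>i<n. (\<Sum>j<m. b' i j) + \<delta>' i = B i"
    using feas' unfolding feasible_def by auto
  have Bb: "\<forall>i<n. (\<Sum>j<m. b i j) + \<delta> i = B i" using feas unfolding feasible_def by auto
  have pp: "p j > 0" if "j < m" for j
    unfolding p_def price_def using False b_pos that by (intro sum_pos) auto
  have S1eq: "(\<Sum>i<n. \<Sum>j<m. (if b' i j = 0 then 0 else b' i j * ln (b' i j / b i j)))
      = (\<Sum>j<m. \<Sum>i<n. KL (b' i j) (b i j))"
    by (subst sum.swap) (simp add: KL_def)
  have S1: "(\<Sum>j<m. KL (p' j) (p j)) \<le> (\<Sum>j<m. \<Sum>i<n. KL (b' i j) (b i j))"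
    unfolding p_def p'_def price_def using b_pos b'nn by (intro sum_mono logsum) auto
  have S2: "(\<Sum>i<n. \<delta>' i - \<delta> i) \<le> (\<Sum>i<n. (if \<delta>' i = 0 then 0 else \<delta>' i * ln (\<delta>' i / \<delta> i)))"
    using kl_ge d'nn \<delta>_pos by (intro sum_mono) (simp add: KL_def)
  have dsum: "(\<Sum>i<n. \<delta>' i - \<delta> i) = (\<Sum>j<m. p j - p' j)"
  proof -
    have "(\<Sum>i<n. \<delta>' i - \<delta> i) = (\<Sum>i<n. (\<Sum>j<m. b i j) - (\<Sum>j<m. b' i j))"
      using Bb Bb' by (intro sum.cong) (auto simp: algebra_simps)
    also have "\<dots> = (\<Sum>j<m. p j - p' j)"
      unfolding p_def p'_def price_def sum_subtractf by (simp add: sum.swap[of _ "{..<n}"])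
    finally show ?thesis .
  qed
  have pointwise: "xlogx (p' j) - xlogx (p j) - (1 + ln (p j)) * (p' j - p j) = KL (p' j) (p j) + (p j - p' j)"
    if "j < m" for j
    using pp[OF that] by (auto simp: xlogx_def KL_def ln_div algebra_simps)
  have lhs: "phi n m v b' - phi n m v b - (\<Sum>i<n. \<Sum>j<m. grad_phi n v b i j * (b' i j - b i j))
      = (\<Sum>j<m. xlogx (p' j) - xlogx (p j) - (1 + ln (p j)) * (p' j - p j))"
  proof -
    have g: "(\<Sum>i<n. \<Sum>j<m. grad_phi n v b i j * (b' i j - b i j))
        = (\<Sum>i<n. \<Sum>j<m. (ln (p j) - ln (v i j)) * (b' i j - b i j))"
      unfolding grad_phi_def p_def[symmetric] using pp v_pos
    proof (intro sum.cong refl)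
      fix i j assume "i \<in> {..<n}" "j \<in> {..<m}"
      hence "p j > 0" "v i j > 0" using pp v_pos by auto
      thus "ln (p j / v i j) * (b' i j - b i j) = (ln (p j) - ln (v i j)) * (b' i j - b i j)"
        by (simp add: ln_div)
    qed
    have h: "(\<Sum>i<n. \<Sum>j<m. (1 + ln (p j)) * (b' i j - b i j)) = (\<Sum>j<m. (1 + ln (p j)) * (p' j - p j))"
      unfolding p_def p'_def price_def
      by (subst sum.swap) (simp add: sum_distrib_left[symmetric] sum_subtractf[symmetric])
    have "phi n m v b' - phi n m v b - (\<Sum>i<n. \<Sum>j<m. grad_phi n v b i j * (b' i j - b i j))
       = (\<Sum>j<m. xlogx (p' j) - xlogx (p j)) - (\<Sum>i<n. \<Sum>j<m. (1 + ln (p j)) * (b' i j - b i j))"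
    proof -
      have k: "(\<Sum>i<n. \<Sum>j<m. (1 + ln (p j)) * (b' i j - b i j))
        = (\<Sum>i<n. \<Sum>j<m. (1 + ln (v i j)) * b' i j) - (\<Sum>i<n. \<Sum>j<m. (1 + ln (v i j)) * b i j)
          + (\<Sum>i<n. \<Sum>j<m. (ln (p j) - ln (v i j)) * (b' i j - b i j))"
        by (simp add: sum_subtractf[symmetric] sum.distrib[symmetric] algebra_simps)
      have s: "(\<Sum>j<m. xlogx (p' j) - xlogx (p j)) = (\<Sum>j<m. xlogx (p' j)) - (\<Sum>j<m. xlogx (p j))"
        by (simp add: sum_subtractf)
      show ?thesis unfolding g phi_def p_def[symmetric] p'_def[symmetric] s k by linarith
    qed
    thus ?thesis unfolding h by (simp add: sum_subtractf)
  qed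
  have "(\<Sum>j<m. xlogx (p' j) - xlogx (p j) - (1 + ln (p j)) * (p' j - p j))
      = (\<Sum>j<m. KL (p' j) (p j)) + (\<Sum>j<m. p j - p' j)"
    using pointwise by (simp add: sum.distrib[symmetric])
  thus ?thesis using lhs S1 S2 S1eq dsum by linarith
qed

end
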